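(* Let $\pi:L_{\mathcal F}\to L_{\mathcal G}$ satisfy (REG). For each $X\in L_{\mathcal F}$ and $Q\in L^*_{\mathcal F}\cap\mathcal P$, \[\inf_\Gamma K^\Gamma(X,Q)=K(X,Q),\] where the infimum is taken over all finite partitions $\Gamma$ of $\Omega$ into $\mathcal G$-measurable sets.
   Context: Let $(\Omega,\mathcal F,\mathbb P)$ be a probability space and $\mathcal G\subseteq\mathcal F$ a sub-$\sigma$-algebra. (In)equalities hold $\mathbb P$-a.s. unless a measure is indicated ($\ge_Q$: $Q$-a.s.); $\inf$ is the $\mathbb P$-essential infimum. $L_{\mathcal F}\subseteq L^0(\Omega,\mathcal F,\mathbb P)$, $L_{\mathcal G}\subseteq L^0(\Omega,\mathcal G,\mathbb P)$ are vector lattices closed under multiplication by indicators of $\mathcal F$- (resp. $\mathcal G$-) measurable sets; the order continuous dual $L^*_{\mathcal F}$ of $(L_{\mathcal F},\ge)$ is a lattice contained in $L^1(\Omega,\mathcal F,\mathbb P)$ (functionals $X\mapsto E_{\mathbb P}[ZX]$), closed under multiplication by indicators of sets in $\mathcal F$. $\mathcal P$ = densities of probabilities $Q\ll\mathbb P$. (REG): $\pi(X\mathbf 1_A+Y\mathbf 1_{A^c})=\pi(X)\mathbf 1_A+\pi(Y)\mathbf 1_{A^c}$ for $A\in\mathcal G$. $K(X,Q):=\inf_{\xi\in L_{\mathcal F}}\{\pi(\xi)\mid E_Q[\xi\mid\mathcal G]\ge_Q E_Q[X\mid\mathcal G]\}$. For $A\in\mathcal G$, $\pi_A(X):=\operatorname{ess\,sup}_{\omega\in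 A}\pi(X)(\omega)$; for a finite $\mathcal G$-measurable partition $\Gamma$, $\pi^\Gamma(X):=\sum_{A\in\Gamma}\pi_A(X)\mathbf 1_A$ and $K^\Gamma(X,Q):=\inf_{\xi\in L_{\mathcal F}}\{\pi^\Gamma(\xi)\mid E_Q[\xi\mid\mathcal G]\ge_Q E_Q[X\mid\mathcal G]\}$. *)

theory Defs
  imports "HOL-Probability.Probability"
begin

text \<open>Random variables are functions on the sample space; all (in)equalities between them
are understood M-almost surely (M is the reference probability P).\<close>

text \<open>A space of random variables (a set of representatives of a subspace of L0):
measurable w.r.t. N, a vector lattice for the a.s. order, closed under multiplication by
indicators of N-measurable sets, and closed under M-a.s. modification.\<close>
definition rv_lattice :: "'a measure \<Rightarrow> 'a measure \<Rightarrow> ('a \<Rightarrow> real) set \<Rightarrow> bool" where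
  "rv_lattice M N S \<longleftrightarrow>
     S \<subseteq> borel_measurable N \<and> (\<lambda>_. 0) \<in> S \<and>
     (\<forall>X\<in>S. \<forall>Y\<in>S. (\<lambda>\<omega>. X \<omega> + Y \<omega>) \<in> S \<and> (\<lambda>\<omega>. max (X \<omega>) (Y \<omega>)) \<in> S) \<and>
     (\<forall>c::real. \<forall>X\<in>S. (\<lambda>\<omega>. c * X \<omega>) \<in> S) \<and>
     (\<forall>A\<in>sets N. \<forall>X\<in>S. (\<lambda>\<omega>. X \<omega> * indicator A \<omega>) \<in> S) \<and>
     (\<forall>X\<in>S. \<forall>Y\<in>borel_measurable N. (AE \<omega> in M. X \<omega> = Y \<omega>) \<longrightarrow> Y \<in> S)"

text \<open>Order continuity of a linear functional on LF: phi(X_alpha) -> 0 whenever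
X_alpha decreases (downward directed net) to 0 in the order of LF.\<close>
definition order_continuous :: "'a measure \<Rightarrow> ('a \<Rightarrow> real) set \<Rightarrow> (('a \<Rightarrow> real) \<Rightarrow> real) \<Rightarrow> bool" where
  "order_continuous M LF \<phi> \<longleftrightarrow>
     (\<forall>D. D \<subseteq> LF \<and> D \<noteq> {} \<and>
          (\<forall>X\<in>D. \<forall>Y\<in>D. \<exists>W\<in>D. (AE \<omega> in M. W \<omega> \<le> X \<omega>) \<and> (AE \<omega> in M. W \<omega> \<le> Y \<omega>)) \<and>
          (\<forall>X\<in>D. AE \<omega> in M. 0 \<le> X \<omega>) \<and>
          (\<forall>Y\<in>LF. (\<forall>X\<in>D. AE \<omega> in M. Y \<omega> \<le> X \<omega>) \<longrightarrow> (AE \<omega> in M. Y \<omega> \<le> 0))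
      \<longrightarrow> (\<forall>e>0. \<exists>X0\<in>D. \<forall>X\<in>D. (AE \<omega> in M. X \<omega> \<le> X0 \<omega>) \<longrightarrow> \<bar>\<phi> X\<bar> < e))"

text \<open>The order continuous dual of LF, identified with the densities Z in L1 for which
X |-> E[Z X] is a (well-defined) order continuous functional on LF.\<close>
definition oc_dual :: "'a measure \<Rightarrow> ('a \<Rightarrow> real) set \<Rightarrow> ('a \<Rightarrow> real) set" where
  "oc_dual M LF = {Z. integrable M Z \<and> (\<forall>X\<in>LF. integrable M (\<lambda>\<omega>. Z \<omega> * X \<omega>)) \<and>
                      order_continuous M LF (\<lambda>X. \<integral>\<omega>. Z \<omega> * X \<omega> \<partial>M)}"

text \<open>Densities of probability measures Q << P.\<close>
definition prob_densities :: "'a measure \<Rightarrow> ('a \<Rightarrow> real) set" where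
  "prob_densities M = {Z. integrable M Z \<and> (AE \<omega> in M. 0 \<le> Z \<omega>) \<and> (\<integral>\<omega>. Z \<omega> \<partial>M) = 1}"

definition dmeas :: "'a measure \<Rightarrow> ('a \<Rightarrow> real) \<Rightarrow> 'a measure" where
  "dmeas M Q = density M (\<lambda>\<omega>. ennreal (Q \<omega>))"

definition is_ess_inf :: "'a measure \<Rightarrow> 'a measure \<Rightarrow> ('a \<Rightarrow> ereal) set \<Rightarrow> ('a \<Rightarrow> ereal) \<Rightarrow> bool" where
  "is_ess_inf M N S Y \<longleftrightarrow> Y \<in> borel_measurable N \<and> (\<forall>X\<in>S. AE \<omega> in M. Y \<omega> \<le> X \<omega>) \<and>
     (\<forall>Z\<in>borel_measurable N. (\<forall>X\<in>S. AE \<omega> in M. Z \<omega> \<le> X \<omega>) \<longrightarrow> (AE \<omega> in M. Z \<omega> \<le> Y \<omega>))"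

definition ess_inf_fam :: "'a measure \<Rightarrow> 'a measure \<Rightarrow> ('a \<Rightarrow> ereal) set \<Rightarrow> ('a \<Rightarrow> ereal)" where
  "ess_inf_fam M N S = (SOME Y. is_ess_inf M N S Y)"

definition Kfun :: "'a measure \<Rightarrow> 'a measure \<Rightarrow> ('a \<Rightarrow> real) set \<Rightarrow> (('a \<Rightarrow> real) \<Rightarrow> 'a \<Rightarrow> ereal)
                    \<Rightarrow> ('a \<Rightarrow> real) \<Rightarrow> ('a \<Rightarrow> real) \<Rightarrow> 'a \<Rightarrow> ereal" where
  "Kfun M G LF \<rho> X Q = ess_inf_fam M G
     (\<rho> ` {\<xi>\<in>LF. AE \<omega> in dmeas M Q.
              real_cond_exp (dmeas M Q) G \<xi> \<omega> \<ge> real_cond_exp (dmeas M Q) G X \<omega>})"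

definition pi_A :: "'a measure \<Rightarrow> (('a \<Rightarrow> real) \<Rightarrow> 'a \<Rightarrow> real) \<Rightarrow> 'a set \<Rightarrow> ('a \<Rightarrow> real) \<Rightarrow> ereal" where
  "pi_A M \<pi> A X = esssup M (\<lambda>\<omega>. if \<omega> \<in> A then ereal (\<pi> X \<omega>) else -\<infinity>)"

definition pi_Gamma :: "'a measure \<Rightarrow> (('a \<Rightarrow> real) \<Rightarrow> 'a \<Rightarrow> real) \<Rightarrow> 'a set set \<Rightarrow> ('a \<Rightarrow> real) \<Rightarrow> 'a \<Rightarrow> ereal" where
  "pi_Gamma M \<pi> \<Gamma> X = (\<lambda>\<omega>. \<Sum>A\<in>\<Gamma>. pi_A M \<pi> A X * indicator A \<omega>)"

definition fin_partition :: "'a measure \<Rightarrow> 'a set set \<Rightarrow> bool" where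
  "fin_partition G \<Gamma> \<longleftrightarrow> finite \<Gamma> \<and> \<Gamma> \<subseteq> sets G \<and> \<Union>\<Gamma> = space G \<and> {} \<notin> \<Gamma> \<and> disjoint \<Gamma>"

definition K_Gamma :: "'a measure \<Rightarrow> 'a measure \<Rightarrow> ('a \<Rightarrow> real) set \<Rightarrow> (('a \<Rightarrow> real) \<Rightarrow> 'a \<Rightarrow> real)
                    \<Rightarrow> 'a set set \<Rightarrow> ('a \<Rightarrow> real) \<Rightarrow> ('a \<Rightarrow> real) \<Rightarrow> 'a \<Rightarrow> ereal" where
  "K_Gamma M G LF \<pi> \<Gamma> X Q = Kfun M G LF (pi_Gamma M \<pi> \<Gamma>) X Q"

definition K :: "'a measure \<Rightarrow> 'a measure \<Rightarrow> ('a \<Rightarrow> real) set \<Rightarrow> (('a \<Rightarrow> real) \<Rightarrow> 'a \<Rightarrow> real)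
                    \<Rightarrow> ('a \<Rightarrow> real) \<Rightarrow> ('a \<Rightarrow> real) \<Rightarrow> 'a \<Rightarrow> ereal" where
  "K M G LF \<pi> X Q = Kfun M G LF (\<lambda>\<xi> \<omega>. ereal (\<pi> \<xi> \<omega>)) X Q"

definition REG :: "'a measure \<Rightarrow> 'a measure \<Rightarrow> ('a \<Rightarrow> real) set \<Rightarrow> (('a \<Rightarrow> real) \<Rightarrow> 'a \<Rightarrow> real) \<Rightarrow> bool" where
  "REG M G LF \<pi> \<longleftrightarrow> (\<forall>A\<in>sets G. \<forall>X\<in>LF. \<forall>Y\<in>LF.
     AE \<omega> in M. \<pi> (\<lambda>\<eta>. X \<eta> * indicator A \<eta> + Y \<eta> * indicator (space M - A) \<eta>) \<omega>
                 = \<pi> X \<omega> * indicator A \<omega> + \<pi> Y \<omega> * indicator (space M - A) \<omega>)"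

end

theory Submission
  imports Defs
begin

definition phi :: "ereal \<Rightarrow> real" where
  "phi x = (case x of ereal r \<Rightarrow> arctan r | PInfty \<Rightarrow> pi/2 | MInfty \<Rightarrow> -pi/2)"

lemma au: "arctan r < pi/2" using arctan_ubound by simp
lemma al: "- (pi/2) < arctan r" using arctan_lbound by simp
lemma au2: "arctan r * 2 < pi" using au[of r] by simp

lemma phi_less: "x < y \<Longrightarrow> phi x < phi y"
  using pi_gt_zero by (cases x; cases y) (simp_all add: phi_def arctan_less_iff au al au2)

lemma phi_le: "x \<le> y \<Longrightarrow> phi x \<le> phi y"
  using phi_less by (cases "x = y") (auto simp: order_le_less)

lemma phi_le_iff: "phi x \<le> phi y \<longleftrightarrow> x \<le> y"
  by (meson linorder_not_le phi_le phi_less)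

lemma phi_bound: "\<bar>phi x\<bar> \<le> pi/2"
  using au[of "real_of_ereal x"] al[of "real_of_ereal x"] pi_gt_zero
  by (cases x) (simp_all add: phi_def abs_le_iff)

lemma phi_ub: "phi x * 2 \<le> pi" using phi_bound[of x] by (simp add: abs_le_iff)

lemma phi_meas[measurable]: "f \<in> borel_measurable M \<Longrightarrow> (\<lambda>x. phi (f x)) \<in> borel_measurable M"
  by (rule borel_measurable_ereal_cases[where H=phi]) (auto simp: phi_def)

lemma ess_inf_exists:
  assumes P: "prob_space M" and sub: "subalgebra M G"
  shows "is_ess_inf M G S (ess_inf_fam M G S)"
proof -
  interpret prob_space M by fact
  define L where "L = {Z \<in> borel_measurable G. \<forall>X\<in>S. AE \<omega> in M. Z \<omega> \<le> X \<omega>}"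
  define I where "I Z = (\<integral>\<omega>. phi (Z \<omega>) \<partial>M)" for Z :: "'a \<Rightarrow> ereal"
  have measM: "Z \<in> borel_measurable M" if "Z \<in> borel_measurable G" for Z :: "'a \<Rightarrow> ereal"
    using measurable_from_subalg[OF sub that] .
  have intg: "integrable M (\<lambda>\<omega>. phi (Z \<omega>))" if "Z \<in> borel_measurable G" for Z
    by (rule integrable_const_bound[where B="pi/2"]) (use phi_bound measM[OF that] in auto)
  have Ibd: "I Z \<le> pi/2" if "Z \<in> borel_measurable G" for Z
  proof -
    have "I Z \<le> (\<integral>\<omega>. pi/2 \<partial>M)" unfolding I_def
      by (rule integral_mono[OF intg[OF that]]) (auto simp: emeasure_space_1 phi_ub)
    then show ?thesis by (simp add: prob_space)
  qed
  have mInf: "(\<lambda>_. -\<infinity>) \<in> L" unfolding L_def by auto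
  have bdd: "bdd_above (I ` L)" using Ibd unfolding L_def by (intro bdd_aboveI[where M="pi/2"]) auto
  define c where "c = (SUP Z\<in>L. I Z)"
  have "\<exists>Z\<in>L. c - 1/Suc k < I Z" for k :: nat
  proof -
    have "c - 1/Suc k < c" by simp
    then show ?thesis unfolding c_def using less_cSUP_iff[OF _ bdd] mInf by (metis empty_iff)
  qed
  then obtain Zs where Zs: "\<And>k. Zs k \<in> L" "\<And>k. c - 1/Suc k < I (Zs k)" by metis
  define Y where "Y \<omega> = (SUP k. Zs k \<omega>)" for \<omega>
  have ZG: "Zs k \<in> borel_measurable G" for k using Zs(1) unfolding L_def by auto
  have YG: "Y \<in> borel_measurable G" unfolding Y_def by (intro borel_measurable_SUP ZG) auto
  have YL: "Y \<in> L"
  proof -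
    { fix X assume "X \<in> S"
      then have "\<forall>k. AE \<omega> in M. Zs k \<omega> \<le> X \<omega>" using Zs(1) unfolding L_def by auto
      then have "AE \<omega> in M. \<forall>k. Zs k \<omega> \<le> X \<omega>" by (simp add: AE_all_countable)
      then have "AE \<omega> in M. Y \<omega> \<le> X \<omega>" by eventually_elim (auto simp: Y_def intro: SUP_least) }
    then show ?thesis using YG unfolding L_def by auto
  qed
  have "I Y \<le> c" unfolding c_def using YL bdd by (rule cSUP_upper)
  have "c \<le> I Y"
  proof (rule field_le_epsilon)
    fix e :: real assume "0 < e"
    then obtain k where k: "1 / Suc k < e" using nat_approx_posE by metis
    have "I (Zs k) \<le> I Y" unfolding I_def
    proof (rule integral_mono[OF intg[OF ZG] intg[OF YG]])
      fix \<omega> show "phi (Zs k \<omega>) \<le> phi (Y \<omega>)" unfolding Y_def by (intro phi_le SUP_upper) auto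
    qed
    then show "c \<le> I Y + e" using Zs(2)[of k] k by linarith
  qed
  have greatest: "AE \<omega> in M. Z \<omega> \<le> Y \<omega>" if "Z \<in> L" for Z
  proof -
    define W where "W \<omega> = max (Y \<omega>) (Z \<omega>)" for \<omega>
    have WG: "W \<in> borel_measurable G" using YG that unfolding W_def L_def by auto
    have "W \<in> L" using YL that unfolding L_def W_def
      by (auto elim!: AE_mp[OF _ AE_mp] intro!: AE_I2 ballI) 
    then have "I W \<le> c" unfolding c_def using bdd by (rule cSUP_upper)
    then have "I W - I Y \<le> 0" using \<open>c \<le> I Y\<close> by simp
    moreover have "I W - I Y = (\<integral>\<omega>. phi (W \<omega>) - phi (Y \<omega>) \<partial>M)"
      unfolding I_def using intg[OF WG] intg[OF YG] by simp
    moreover have nn: "AE \<omega> in M. 0 \<le> phi (W \<omega>) - phi (Y \<omega>)" by (auto simp: W_def phi_le)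
    moreover have "0 \<le> (\<integral>\<omega>. phi (W \<omega>) - phi (Y \<omega>) \<partial>M)"
      using nn by (intro integral_nonneg_AE) auto
    ultimately have "(\<integral>\<omega>. phi (W \<omega>) - phi (Y \<omega>) \<partial>M) = 0" by linarith
    then have "AE \<omega> in M. phi (W \<omega>) - phi (Y \<omega>) = 0"
      using integral_nonneg_eq_0_iff_AE[OF _ nn] intg[OF WG] intg[OF YG] by auto
    then show ?thesis
      by eventually_elim (auto simp: W_def, metis max.cobounded2 max_def phi_le_iff)
  qed
  have "is_ess_inf M G S Y"
    unfolding is_ess_inf_def using YG YL greatest unfolding L_def by auto
  then show ?thesis unfolding ess_inf_fam_def by (rule someI[of "is_ess_inf M G S"])
qed

lemma pi_Gamma_at:
  assumes "finite \<Gamma>" "disjoint \<Gamma>" "A \<in> \<Gamma>" "\<omega> \<in> A"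
  shows "pi_Gamma M \<pi> \<Gamma> \<xi> \<omega> = pi_A M \<pi> A \<xi>"
proof -
  have "pi_Gamma M \<pi> \<Gamma> \<xi> \<omega> = pi_A M \<pi> A \<xi> * indicator A \<omega> +
      (\<Sum>B\<in>\<Gamma> - {A}. pi_A M \<pi> B \<xi> * indicator B \<omega>)"
    unfolding pi_Gamma_def using assms by (simp add: sum.remove)
  also have "(\<Sum>B\<in>\<Gamma> - {A}. pi_A M \<pi> B \<xi> * indicator B \<omega>) = 0"
  proof (rule sum.neutral, intro ballI)
    fix B assume "B \<in> \<Gamma> - {A}"
    then have "B \<in> \<Gamma>" "B \<noteq> A" by auto
    then have "\<omega> \<notin> B" using disjointD[OF assms(2) \<open>B \<in> \<Gamma>\<close> assms(3)] assms(4) by auto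
    then show "pi_A M \<pi> B \<xi> * indicator B \<omega> = 0" by simp
  qed
  finally show ?thesis using assms by simp
qed

lemma lower_Gamma:
  assumes sub: "subalgebra M G" and P: "fin_partition G \<Gamma>"
  shows "AE \<omega> in M. ereal (\<pi> \<xi> \<omega>) \<le> pi_Gamma M \<pi> \<Gamma> \<xi> \<omega>"
proof -
  have fin: "finite \<Gamma>" and dj: "disjoint \<Gamma>" and un: "\<Union>\<Gamma> = space M"
    using P sub unfolding fin_partition_def subalgebra_def by auto
  have "AE \<omega> in M. \<forall>A\<in>\<Gamma>. (\<lambda>\<eta>. if \<eta> \<in> A then ereal (\<pi> \<xi> \<eta>) else -\<infinity>) \<omega>
      \<le> esssup M (\<lambda>\<eta>. if \<eta> \<in> A then ereal (\<pi> \<xi> \<eta>) else -\<infinity>)"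
    by (intro AE_finite_allI[OF fin] esssup_AE)
  then show ?thesis
  proof (rule AE_mp, intro AE_I2 impI)
    fix \<omega> assume \<omega>: "\<omega> \<in> space M" and H: "\<forall>A\<in>\<Gamma>. (\<lambda>\<eta>. if \<eta> \<in> A then ereal (\<pi> \<xi> \<eta>) else -\<infinity>) \<omega>
      \<le> esssup M (\<lambda>\<eta>. if \<eta> \<in> A then ereal (\<pi> \<xi> \<eta>) else -\<infinity>)"
    obtain A where A: "A \<in> \<Gamma>" "\<omega> \<in> A" using \<omega> un by auto
    show "ereal (\<pi> \<xi> \<omega>) \<le> pi_Gamma M \<pi> \<Gamma> \<xi> \<omega>"
      using H A pi_Gamma_at[OF fin dj A] unfolding pi_A_def by auto
  qed
qed

lemma upper_Gamma:
  assumes sub: "subalgebra M G" and fG: "\<pi> \<xi> \<in> borel_measurable G" and n: "n > 0"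
  shows "\<exists>\<Gamma>. fin_partition G \<Gamma> \<and> (\<forall>\<omega>\<in>space M. \<bar>\<pi> \<xi> \<omega>\<bar> < real n \<longrightarrow>
           pi_Gamma M \<pi> \<Gamma> \<xi> \<omega> \<le> ereal (\<pi> \<xi> \<omega> + 1 / real n))"
proof -
  define f where "f = \<pi> \<xi>"
  have fG': "f \<in> borel_measurable G" using fG f_def by simp
  define g where "g \<eta> = (if \<bar>f \<eta>\<bar> < real n then \<lfloor>real n * f \<eta>\<rfloor> else int n * int n + 1)" for \<eta>
  have gm: "g \<in> measurable G (count_space UNIV)" unfolding g_def using fG' by measurable
  define lv where "lv k = {\<eta>\<in>space G. g \<eta> = k}" for k
  define \<Gamma> where "\<Gamma> = lv ` (g ` space G)"
  have gr: "g \<eta> \<in> {- (int n * int n) - 1 .. int n * int n + 1}" for \<eta>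
  proof (cases "\<bar>f \<eta>\<bar> < real n")
    case True
    then have "- (real n * real n) < real n * f \<eta>" "real n * f \<eta> < real n * real n"
      using n mult_strict_left_mono[of "- f \<eta>" "real n" "real n"] mult_strict_left_mono[of "f \<eta>" "real n" "real n"]
      by (auto simp: abs_less_iff)
    then have "- (int n * int n) - 1 \<le> \<lfloor>real n * f \<eta>\<rfloor>" "\<lfloor>real n * f \<eta>\<rfloor> \<le> int n * int n"
      by (auto simp: le_floor_iff floor_le_iff)
    then show ?thesis using True unfolding g_def by auto
  qed (auto simp: g_def)
  have fin: "finite \<Gamma>" unfolding \<Gamma>_def
    by (rule finite_imageI, rule finite_subset[of _ "{- (int n * int n) - 1 .. int n * int n + 1}"]) (use gr in auto)
  have lvG: "lv k \<in> sets G" for k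
  proof -
    have "lv k = g -` {k} \<inter> space G" unfolding lv_def by auto
    then show ?thesis using measurable_sets[OF gm, of "{k}"] by simp
  qed
  have part: "fin_partition G \<Gamma>"
    unfolding fin_partition_def
  proof (intro conjI)
    show "disjoint \<Gamma>" unfolding \<Gamma>_def disjoint_def lv_def by auto
  qed (use fin lvG in \<open>auto simp: \<Gamma>_def lv_def\<close>)
  have main: "pi_Gamma M \<pi> \<Gamma> \<xi> \<omega> \<le> ereal (f \<omega> + 1 / real n)"
    if \<omega>: "\<omega> \<in> space M" "\<bar>f \<omega>\<bar> < real n" for \<omega>
  proof -
    have sp: "space G = space M" using sub unfolding subalgebra_def by auto
    define A where "A = lv (g \<omega>)"
    have A: "A \<in> \<Gamma>" "\<omega> \<in> A" unfolding A_def \<Gamma>_def lv_def using \<omega> sp by auto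
    have AM: "A \<in> sets M" using lvG sub unfolding A_def subalgebra_def by auto
    have fM: "f \<in> borel_measurable M" using measurable_from_subalg[OF sub fG'] .
    have "pi_Gamma M \<pi> \<Gamma> \<xi> \<omega> = pi_A M \<pi> A \<xi>"
      using pi_Gamma_at[OF fin _ A] part unfolding fin_partition_def by auto
    also have "\<dots> \<le> ereal (f \<omega> + 1 / real n)"
      unfolding pi_A_def
    proof (rule esssup_I)
      show "(\<lambda>\<eta>. if \<eta> \<in> A then ereal (\<pi> \<xi> \<eta>) else - \<infinity>) \<in> borel_measurable M"
        using AM fM unfolding f_def by measurable
      have "(if \<eta> \<in> A then ereal (\<pi> \<xi> \<eta>) else - \<infinity>) \<le> ereal (f \<omega> + 1 / real n)" for \<eta>
      proof (cases "\<eta> \<in> A")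
        case True
        then have ge: "g \<eta> = g \<omega>" unfolding A_def lv_def by auto
        have gw: "g \<omega> = \<lfloor>real n * f \<omega>\<rfloor>" using \<omega> unfolding g_def by auto
        have "real n * f \<omega> < real n * real n" using \<omega> n by (auto simp: abs_less_iff)
        then have "\<lfloor>real n * f \<omega>\<rfloor> \<le> int n * int n" by (auto simp: floor_le_iff)
        then have "\<bar>f \<eta>\<bar> < real n" using ge gw unfolding g_def by (auto split: if_splits)
        then have "\<lfloor>real n * f \<eta>\<rfloor> = \<lfloor>real n * f \<omega>\<rfloor>" using ge gw unfolding g_def by auto
        moreover have "real n * f \<eta> < real_of_int \<lfloor>real n * f \<eta>\<rfloor> + 1"
          by (rule real_of_int_floor_add_one_gt)
        moreover have "real_of_int \<lfloor>real n * f \<omega>\<rfloor> \<le> real n * f \<omega>"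
          by (rule of_int_floor_le)
        ultimately have "real n * f \<eta> < real n * f \<omega> + 1" by linarith
        then have "f \<eta> < f \<omega> + 1 / real n" using n by (simp add: field_simps)
        then show ?thesis using True unfolding f_def by simp
      qed simp
      then show "AE \<eta> in M. (if \<eta> \<in> A then ereal (\<pi> \<xi> \<eta>) else - \<infinity>) \<le> ereal (f \<omega> + 1 / real n)"
        by simp
    qed
    finally show ?thesis .
  qed
  show ?thesis using part main unfolding f_def by blast
qed

theorem lemma26:
  fixes M G :: "'a measure" and LF LG :: "('a \<Rightarrow> real) set"
    and \<pi> :: "('a \<Rightarrow> real) \<Rightarrow> 'a \<Rightarrow> real" and X Q :: "'a \<Rightarrow> real"
  assumes "prob_space M" and "subalgebra M G"
    and "rv_lattice M M LF" and "rv_lattice M G LG"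
    and "\<forall>Z1\<in>oc_dual M LF. \<forall>Z2\<in>oc_dual M LF.
           (\<lambda>\<omega>. max (Z1 \<omega>) (Z2 \<omega>)) \<in> oc_dual M LF \<and> (\<lambda>\<omega>. min (Z1 \<omega>) (Z2 \<omega>)) \<in> oc_dual M LF"
    and "\<forall>A\<in>sets M. \<forall>Z\<in>oc_dual M LF. (\<lambda>\<omega>. Z \<omega> * indicator A \<omega>) \<in> oc_dual M LF"
    and "\<forall>\<xi>\<in>LF. \<pi> \<xi> \<in> LG"
    and "\<forall>\<xi>\<in>LF. \<forall>\<eta>\<in>LF. (AE \<omega> in M. \<xi> \<omega> = \<eta> \<omega>) \<longrightarrow> (AE \<omega> in M. \<pi> \<xi> \<omega> = \<pi> \<eta> \<omega>)"
    and "REG M G LF \<pi>"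
    and "X \<in> LF" and "Q \<in> oc_dual M LF \<inter> prob_densities M"
  shows "AE \<omega> in M. ess_inf_fam M G {K_Gamma M G LF \<pi> \<Gamma> X Q | \<Gamma>. fin_partition G \<Gamma>} \<omega>
                     = K M G LF \<pi> X Q \<omega>"
proof -
  have P: "prob_space M" and sub: "subalgebra M G" using assms by auto
  have sp: "space G = space M" using sub unfolding subalgebra_def by auto
  define F where "F = {\<xi>\<in>LF. AE \<omega> in dmeas M Q.
              real_cond_exp (dmeas M Q) G \<xi> \<omega> \<ge> real_cond_exp (dmeas M Q) G X \<omega>}"
  define Kv where "Kv = K M G LF \<pi> X Q"
  define KG where "KG \<Gamma> = K_Gamma M G LF \<pi> \<Gamma> X Q" for \<Gamma>
  define E where "E = ess_inf_fam M G {KG \<Gamma> | \<Gamma>. fin_partition G \<Gamma>}"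
  have Kv_eq: "Kv = ess_inf_fam M G ((\<lambda>\<xi> \<omega>. ereal (\<pi> \<xi> \<omega>)) ` F)"
    unfolding Kv_def K_def Kfun_def F_def ..
  have KG_eq: "KG \<Gamma> = ess_inf_fam M G (pi_Gamma M \<pi> \<Gamma> ` F)" for \<Gamma>
    unfolding KG_def K_Gamma_def Kfun_def F_def ..
  have Kv_ess: "is_ess_inf M G ((\<lambda>\<xi> \<omega>. ereal (\<pi> \<xi> \<omega>)) ` F) Kv"
    unfolding Kv_eq by (rule ess_inf_exists[OF P sub])
  have KG_ess: "is_ess_inf M G (pi_Gamma M \<pi> \<Gamma> ` F) (KG \<Gamma>)" for \<Gamma>
    unfolding KG_eq by (rule ess_inf_exists[OF P sub])
  have E_ess: "is_ess_inf M G {KG \<Gamma> | \<Gamma>. fin_partition G \<Gamma>} E"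
    unfolding E_def by (rule ess_inf_exists[OF P sub])
  have piG: "\<pi> \<xi> \<in> borel_measurable G" if "\<xi> \<in> F" for \<xi>
    using that assms(4,7) unfolding F_def rv_lattice_def by auto
  have KvG: "Kv \<in> borel_measurable G" using Kv_ess unfolding is_ess_inf_def by auto
  have EG: "E \<in> borel_measurable G" using E_ess unfolding is_ess_inf_def by auto
  have Kv_lb: "AE \<omega> in M. Kv \<omega> \<le> ereal (\<pi> \<xi> \<omega>)" if "\<xi> \<in> F" for \<xi>
    using Kv_ess that unfolding is_ess_inf_def by auto
  have step1: "AE \<omega> in M. Kv \<omega> \<le> KG \<Gamma> \<omega>" if "fin_partition G \<Gamma>" for \<Gamma>
  proof -
    have "\<forall>Y\<in>pi_Gamma M \<pi> \<Gamma> ` F. AE \<omega> in M. Kv \<omega> \<le> Y \<omega>"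
    proof
      fix Y assume "Y \<in> pi_Gamma M \<pi> \<Gamma> ` F"
      then obtain \<xi> where \<xi>: "\<xi> \<in> F" "Y = pi_Gamma M \<pi> \<Gamma> \<xi>" by auto
      show "AE \<omega> in M. Kv \<omega> \<le> Y \<omega>"
        using Kv_lb[OF \<xi>(1)] lower_Gamma[OF sub that, of \<pi> \<xi>] unfolding \<xi>(2)
        by eventually_elim (rule order_trans)
    qed
    then show ?thesis using KG_ess[of \<Gamma>] KvG unfolding is_ess_inf_def by blast
  qed
  have step2: "AE \<omega> in M. Kv \<omega> \<le> E \<omega>"
    using E_ess KvG step1 unfolding is_ess_inf_def by blast
  have step3: "AE \<omega> in M. E \<omega> \<le> ereal (\<pi> \<xi> \<omega>)" if \<xi>: "\<xi> \<in> F" for \<xi>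
  proof -
    have "\<forall>n. \<exists>\<Gamma>. fin_partition G \<Gamma> \<and> (\<forall>\<omega>\<in>space M. \<bar>\<pi> \<xi> \<omega>\<bar> < real (Suc n) \<longrightarrow>
           pi_Gamma M \<pi> \<Gamma> \<xi> \<omega> \<le> ereal (\<pi> \<xi> \<omega> + 1 / real (Suc n)))"
      using upper_Gamma[OF sub, of \<pi> \<xi>] piG[OF \<xi>] by (meson zero_less_Suc)
    then obtain Gs where Gs: "\<And>n. fin_partition G (Gs n)"
      "\<And>n \<omega>. \<omega> \<in> space M \<Longrightarrow> \<bar>\<pi> \<xi> \<omega>\<bar> < real (Suc n) \<Longrightarrow>
           pi_Gamma M \<pi> (Gs n) \<xi> \<omega> \<le> ereal (\<pi> \<xi> \<omega> + 1 / real (Suc n))"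
      by metis
    have "\<forall>n. AE \<omega> in M. E \<omega> \<le> KG (Gs n) \<omega>"
      using E_ess Gs(1) unfolding is_ess_inf_def by blast
    then have a1: "AE \<omega> in M. \<forall>n. E \<omega> \<le> KG (Gs n) \<omega>" by (simp add: AE_all_countable)
    have "\<forall>n. AE \<omega> in M. KG (Gs n) \<omega> \<le> pi_Gamma M \<pi> (Gs n) \<xi> \<omega>"
      using KG_ess \<xi> unfolding is_ess_inf_def by blast
    then have a2: "AE \<omega> in M. \<forall>n. KG (Gs n) \<omega> \<le> pi_Gamma M \<pi> (Gs n) \<xi> \<omega>"
      by (simp add: AE_all_countable)
    from AE_space a1 a2 show ?thesis
    proof (eventually_elim)
      case (elim \<omega>)
      show "E \<omega> \<le> ereal (\<pi> \<xi> \<omega>)"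
      proof (rule ereal_le_epsilon2)
        fix e :: real assume e: "0 < e"
        obtain n1 where n1: "1 / real (Suc n1) < e" using nat_approx_posE[OF e] by metis
        obtain n2 where n2: "\<bar>\<pi> \<xi> \<omega>\<bar> < real n2" using reals_Archimedean2 by blast
        define n where "n = max n1 n2"
        have "\<bar>\<pi> \<xi> \<omega>\<bar> < real (Suc n)" using n2 unfolding n_def by simp
        have "1 / real (Suc n) \<le> 1 / real (Suc n1)" unfolding n_def
          by (intro divide_left_mono) auto
        have "E \<omega> \<le> pi_Gamma M \<pi> (Gs n) \<xi> \<omega>" using elim(2,3) by (meson order_trans)
        also have "\<dots> \<le> ereal (\<pi> \<xi> \<omega> + 1 / real (Suc n))"
          using Gs(2)[OF elim(1) \<open>\<bar>\<pi> \<xi> \<omega>\<bar> < real (Suc n)\<close>] .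
        also have "\<dots> \<le> ereal (\<pi> \<xi> \<omega>) + ereal e"
          using n1 \<open>1 / real (Suc n) \<le> 1 / real (Suc n1)\<close> by simp
        finally show "E \<omega> \<le> ereal (\<pi> \<xi> \<omega>) + ereal e" .
      qed
    qed
  qed
  have step4: "AE \<omega> in M. E \<omega> \<le> Kv \<omega>"
    using Kv_ess EG step3 unfolding is_ess_inf_def by blast
  from step2 step4 have "AE \<omega> in M. E \<omega> = Kv \<omega>" by eventually_elim simp
  then show ?thesis unfolding E_def KG_def Kv_def .
qed

end
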